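(* For all positive integers $n$ and $k$, $$\sum_{i=1}^{k}(-1)^i\binom{ni+k-1}{k}\binom{k+1}{i+1}=(-1)^k\binom{n}{k}.$$
   Context: Binomial coefficients $\binom{m}{j}$ for nonnegative integers $m,j$ are the usual ones, with $\binom{m}{j}=0$ when $j>m$. *)

theory Defs
  imports Main
begin

end

theory Submission imports Defs "HOL-Computational_Algebra.Polynomial" begin

lemma aux: "(C::real)*S = M*D \<Longrightarrow> (-s)*C*S*Y = -M*(s*D*Y)"
proof -
  assume h: "C*S = M*D"
  have "(-s)*C*S*Y = -(s*(C*S)*Y)" by (simp add: mult.assoc)
  also have "\<dots> = -(s*(M*D)*Y)" using h by simp
  finally show ?thesis by (simp add: algebra_simps)
qed

lemma mono_diff:
  "\<forall>m (a::real). r < m \<longrightarrow> (\<Sum>j\<le>m. (-1)^j * real (m choose j) * (real j + a)^r) = 0"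
proof (induction r)
  case 0
  show ?case using choose_alternating_sum[where 'a=real] by simp
next
  case (Suc r)
  show ?case
  proof (intro allI impI)
    fix m and a :: real
    assume "Suc r < m"
    then obtain m' where m: "m = Suc m'" and rm: "r < m'" by (cases m) auto
    have split: "(\<Sum>j\<le>m. (-1)^j * real (m choose j) * (real j + a)^Suc r)
      = (\<Sum>j\<le>m. (-1)^j * real (m choose j) * real j * (real j + a)^r)
        + a * (\<Sum>j\<le>m. (-1)^j * real (m choose j) * (real j + a)^r)"
      by (simp add: sum.distrib sum_distrib_left algebra_simps)
    have z2: "(\<Sum>j\<le>m. (-1)^j * real (m choose j) * (real j + a)^r) = 0"
      using Suc.IH \<open>Suc r < m\<close> by simp
    have "(\<Sum>j\<le>m. (-1)^j * real (m choose j) * real j * (real j + a)^r)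
       = (\<Sum>j\<le>m'. (-1)^Suc j * real (Suc m' choose Suc j) * real (Suc j) * (real (Suc j) + a)^r)"
      unfolding m by (subst sum.atMost_Suc_shift) simp
    also have "\<dots> = - real m * (\<Sum>j\<le>m'. (-1)^j * real (m' choose j) * (real j + (1 + a))^r)"
    proof -
      have hab: "\<And>j. real (Suc m' choose Suc j) * real (Suc j) = real (Suc m') * real (m' choose j)"
      proof -
        fix j
        have "Suc j * (Suc m' choose Suc j) = Suc m' * (m' choose j)"
          using binomial_absorption[of j "Suc m'"] by simp
        then show "real (Suc m' choose Suc j) * real (Suc j) = real (Suc m') * real (m' choose j)"
          by (metis mult.commute of_nat_mult)
      qed
      then have tw: "\<And>j. (-1::real)^Suc j * real (Suc m' choose Suc j) * real (Suc j) * (real (Suc j) + a)^r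
          = - real m * ((-1)^j * real (m' choose j) * (real j + (1 + a))^r)"
      proof -
        fix j
        have e: "real (Suc j) + a = real j + (1+a)" by simp
        have "(-1::real)^Suc j = - ((-1)^j)" by simp
        then show "(-1::real)^Suc j * real (Suc m' choose Suc j) * real (Suc j) * (real (Suc j) + a)^r
          = - real m * ((-1)^j * real (m' choose j) * (real j + (1 + a))^r)"
          unfolding e m using aux[OF hab[of j]] by simp
      qed
      then have "(\<Sum>j\<le>m'. (-1)^Suc j * real (Suc m' choose Suc j) * real (Suc j) * (real (Suc j) + a)^r)
         = (\<Sum>j\<le>m'. - real m * ((-1)^j * real (m' choose j) * (real j + (1 + a))^r))"
        by (rule sum.cong[OF refl])
      also have "\<dots> = - real m * (\<Sum>j\<le>m'. (-1)^j * real (m' choose j) * (real j + (1 + a))^r)"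
        by (rule sum_distrib_left[symmetric])
      finally show ?thesis .

    qed
    also have "\<dots> = 0" using Suc.IH rm by simp
    finally show "(\<Sum>j\<le>m. (-1)^j * real (m choose j) * (real j + a)^Suc r) = 0"
      using split z2 by simp
  qed
qed

lemma poly_diff:
  fixes p :: "real poly"
  assumes "degree p < m"
  shows "(\<Sum>j\<le>m. (-1)^j * real (m choose j) * poly p (real j)) = 0"
proof -
  have "(\<Sum>j\<le>m. (-1)^j * real (m choose j) * poly p (real j))
     = (\<Sum>i\<le>degree p. coeff p i * (\<Sum>j\<le>m. (-1)^j * real (m choose j) * (real j + 0)^i))"
    unfolding poly_altdef by (simp add: sum_distrib_left sum_distrib_right algebra_simps sum.swap[of _ "{..m}"])
  also have "\<dots> = 0"
  proof (intro sum.neutral ballI)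
    fix i assume "i \<in> {..degree p}"
    then have "i < m" using assms by simp
    then show "coeff p i * (\<Sum>j\<le>m. (-1)^j * real (m choose j) * (real j + 0)^i) = 0"
      using mono_diff[rule_format, of i m 0] by simp
  qed
  finally show ?thesis .
qed

theorem mainTheorem8:
  fixes n k :: nat
  assumes "n \<ge> 1" and "k \<ge> 1"
  shows "(\<Sum>i=1..k. (-1::int)^i * int ((n*i + k - 1) choose k) * int ((k+1) choose (i+1)))
         = (-1)^k * int (n choose k)"
proof -
  define g :: "real \<Rightarrow> real" where "g x = (real n * (x - 1) + real k - 1) gchoose k" for x
  define P :: "real poly" where "P = smult (1 / fact k) (\<Prod>i\<in>{0..<k}. [: real k - 1 - real i - real n, real n :])"
  have gP: "poly P x = g x" for x
    unfolding P_def g_def gbinomial_prod_rev poly_smult poly_prod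
    by (simp add: algebra_simps)
  have "degree P \<le> k"
  proof -
    have "degree P \<le> degree (\<Prod>i\<in>{0..<k}. [: real k - 1 - real i - real n, real n :])"
      unfolding P_def by (rule degree_smult_le)
    also have "\<dots> \<le> (\<Sum>i\<in>{0..<k}. degree [: real k - 1 - real i - real n, real n :])"
      using degree_prod_sum_le[OF finite_atLeastLessThan[of 0 k], of "\<lambda>i. [: real k - 1 - real i - real n, real n :]"]
      by (simp only: o_def)
    also have "\<dots> \<le> (\<Sum>i\<in>{0..<k}. 1)"
      by (intro sum_mono) simp
    finally show ?thesis by simp
  qed
  then have "degree P < Suc k" by simp
  from poly_diff[OF this] have Z: "(\<Sum>j\<le>Suc k. (-1)^j * real (Suc k choose j) * g (real j)) = 0"
    by (simp add: gP)
  obtain k' where k: "k = Suc k'" using assms(2) by (cases k) auto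
  define f where "f j = (-1::real)^j * real (Suc k choose j) * g (real j)" for j
  define h where "h i = (-1::real)^i * real ((n*i + k - 1) choose k) * real ((k+1) choose (i+1))" for i
  have split: "(\<Sum>j\<le>Suc k. f j) = f 0 + f 1 + (\<Sum>i\<le>k'. f (Suc (Suc i)))"
    unfolding k by (simp add: sum.atMost_Suc_shift del: sum.atMost_Suc)
  have f0: "f 0 = (-1)^k * real (n choose k)"
  proof -
    have "g 0 = (real k - real n - 1) gchoose k" unfolding g_def by (simp add: algebra_simps)
    also have "\<dots> = (-1)^k * ((of_nat k - (real k - real n - 1) - 1) gchoose k)"
      by (rule gbinomial_negated_upper)
    also have "\<dots> = (-1)^k * real (n choose k)" by (simp add: binomial_gbinomial)
    finally show ?thesis unfolding f_def by simp
  qed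
  have f1: "f 1 = 0"
  proof -
    have "g 1 = real k' gchoose k" unfolding g_def k by simp
    also have "\<dots> = real (k' choose k)" by (simp add: binomial_gbinomial)
    also have "\<dots> = 0" unfolding k by simp
    finally show ?thesis unfolding f_def by simp
  qed
  have fh: "f (Suc (Suc i)) = - h (Suc i)" for i
  proof -
    have "real n * (real (Suc (Suc i)) - 1) + real k - 1 = real (n * Suc i + k - 1)"
      using assms(2) by (simp add: algebra_simps of_nat_diff)
    then have "g (real (Suc (Suc i))) = real ((n * Suc i + k - 1) choose k)"
      unfolding g_def by (simp add: binomial_gbinomial)
    then show ?thesis unfolding f_def h_def by simp
  qed
  have "(\<Sum>i=1..k. h i) = (\<Sum>i\<le>k'. h (Suc i))"
    unfolding k by (simp add: sum.shift_bounds_cl_Suc_ivl atLeast0AtMost del: sum.cl_ivl_Suc)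
  have R: "(\<Sum>i=1..k. h i) = (-1)^k * real (n choose k)"
  proof -
    have "0 = (\<Sum>j\<le>Suc k. f j)" using Z unfolding f_def by simp
    also have "\<dots> = (-1)^k * real (n choose k) - (\<Sum>i\<le>k'. h (Suc i))"
      unfolding split f0 f1 fh by (simp add: sum_negf)
    finally show ?thesis using \<open>(\<Sum>i=1..k. h i) = _\<close> by simp
  qed
  have "real_of_int (\<Sum>i=1..k. (-1::int)^i * int ((n*i + k - 1) choose k) * int ((k+1) choose (i+1)))
        = real_of_int ((-1)^k * int (n choose k))"
    using R unfolding h_def by simp
  then show ?thesis by (simp only: of_int_eq_iff)
qed

end
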